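(* Let $\alpha\in\mathbb{N}_0+\frac12$, $\mathbf m=(m_1,\dots,m_n)\in\mathbb{N}_0^n$ and $(t_{m_1},\dots,t_{m_n})\in\mathbb{R}^n$. Define recursively $\tilde\tau_0=1$, $\tilde\pi_{0;i}=C^{(\alpha)}_i$, $\tilde\rho_{0;i_1i_2}=\rho^{(\alpha)}_{i_1i_2}$, and for $j=1,\dots,n$: $\tilde\tau_j=(1+t_{m_j}\tilde\rho_{j-1;m_jm_j})\tilde\tau_{j-1}$, $\tilde\pi_{j;i}=(1+t_{m_j}\tilde\rho_{j-1;m_jm_j})\tilde\pi_{j-1;i}-t_{m_j}\tilde\rho_{j-1;im_j}\tilde\pi_{j-1;m_j}$ ($i\in\mathbb{N}_0$), $\tilde\rho_{j;i_1i_2}=\tilde\rho_{j-1;i_1i_2}-\dfrac{t_{m_j}\tilde\rho_{j-1;i_1m_j}\tilde\rho_{j-1;i_2m_j}}{1+t_{m_j}\tilde\rho_{j-1;m_jm_j}}$ ($i_1,i_2\in\mathbb{N}_0$). Then $\tau^{(\alpha)}_{\mathbf m}=\tilde\tau_n$ and $C^{(\alpha)}_{\mathbf m;i}=\tilde\pi_{n;i}$ for all $i\in\mathbb{N}_0$. In particular all $\tilde\tau_j,\tilde\pi_{j;i}$ are polynomials in $z$.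
   Context: $C^{(\alpha)}_i(z)=\sum_{k=0}^{\lfloor i/2\rfloor}(-1)^k\frac{\Gamma(i-k+\alpha)}{\Gamma(\alpha)k!(i-2k)!}(2z)^{i-2k}$ are the classical Gegenbauer polynomials; $W^{(\alpha)}(z)=(1-z^2)^{\alpha-1/2}$. For $i,j\in\mathbb{N}_0$, $\rho^{(\alpha)}_{ij}(z)=\int_{-1}^zC^{(\alpha)}_i(u)C^{(\alpha)}_j(u)W^{(\alpha)}(u)\,du$ (a polynomial since $\alpha\in\mathbb{N}_0+\frac12$). For $\mathbf m=(m_1,\dots,m_n)\in\mathbb{N}_0^n$ with real parameters $(t_{m_1},\dots,t_{m_n})$, $\mathcal R^{(\alpha)}_{\mathbf m}$ is the $n\times n$ matrix with entries $[\mathcal R^{(\alpha)}_{\mathbf m}]_{k\ell}=\delta_{k\ell}+t_{m_\ell}\rho^{(\alpha)}_{m_km_\ell}(z)$; $\tau^{(\alpha)}_{\mathbf m}=\det\mathcal R^{(\alpha)}_{\mathbf m}$; $\mathbf Q^{(\alpha)}_{\mathbf m}=\tau^{(\alpha)}_{\mathbf m}(\mathcal R^{(\alpha)}_{\mathbf m})^{-1}(C^{(\alpha)}_{m_1},\dots,C^{(\alpha)}_{m_n})^T$. For $i\in\mathbb{N}_0$, $C^{(\alpha)}_{\mathbf m;i}$ is the $(n+1)$-st entry of $\mathbf Q^{(\alpha)}_{(m_1,\dots,m_n,i)}$ computed with parameters $(t_{m_1},\dots,t_{m_n},s)$, $s\in\mathbb{R}$ arbitrary (the entry does not depend on $s$).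 *)

theory Defs
  imports "HOL-Analysis.Analysis" "HOL-Computational_Algebra.Polynomial"
    "HOL-Computational_Algebra.Fraction_Field"
    "Jordan_Normal_Form.Gauss_Jordan_Elimination" "Jordan_Normal_Form.Determinant"
begin

text \<open>Throughout, alpha = real a + 1/2 with a :: nat, so W(u) = (1-u^2)^a.
  All objects live in the field K of real rational functions in z.\<close>

type_synonym K = "real poly fract"

definition emb :: "real poly \<Rightarrow> K" where
  "emb p = Fract p 1"

definition geg :: "real \<Rightarrow> nat \<Rightarrow> real poly" where
  "geg \<alpha> i = (\<Sum>k\<le>i div 2. Polynomial.smult ((-1)^k * Gamma (real (i - k) + \<alpha>)
        / (Gamma \<alpha> * fact k * fact (i - 2*k))) ([:0, 2:] ^ (i - 2*k)))"

definition rho :: "nat \<Rightarrow> nat \<Rightarrow> nat \<Rightarrow> real poly" where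
  "rho a i j = (THE p. \<forall>z. poly p z =
     (LBINT u=-1..z. poly (geg (real a + 1/2) i) u * poly (geg (real a + 1/2) j) u * (1 - u^2)^a))"

text \<open>The matrix R_m with parameters ts (ts ! l is t_{m_l}).\<close>
definition Rmat :: "nat \<Rightarrow> nat list \<Rightarrow> real list \<Rightarrow> K mat" where
  "Rmat a m ts = Matrix.mat (length m) (length m)
     (\<lambda>(k, l). (if k = l then 1 else 0) + emb [:ts ! l:] * emb (rho a (m ! k) (m ! l)))"

definition tau :: "nat \<Rightarrow> nat list \<Rightarrow> real list \<Rightarrow> K" where
  "tau a m ts = Determinant.det (Rmat a m ts)"

definition Qvec :: "nat \<Rightarrow> nat list \<Rightarrow> real list \<Rightarrow> K vec" where
  "Qvec a m ts = (tau a m ts \<cdot>\<^sub>m the (mat_inverse (Rmat a m ts)))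
      *\<^sub>v Matrix.vec (length m) (\<lambda>k. emb (geg (real a + 1/2) (m ! k)))"

definition Cmi :: "nat \<Rightarrow> nat list \<Rightarrow> real list \<Rightarrow> real \<Rightarrow> nat \<Rightarrow> K" where
  "Cmi a m ts s i = Qvec a (m @ [i]) (ts @ [s]) $ length m"

primrec tilde :: "nat \<Rightarrow> nat list \<Rightarrow> real list \<Rightarrow> nat \<Rightarrow> K \<times> (nat \<Rightarrow> K) \<times> (nat \<Rightarrow> nat \<Rightarrow> K)" where
  "tilde a m ts 0 = (1, \<lambda>i. emb (geg (real a + 1/2) i), \<lambda>i1 i2. emb (rho a i1 i2))"
| "tilde a m ts (Suc j) =
     (case tilde a m ts j of (tt, pp, rr) \<Rightarrow>
        let mj = m ! j; t = emb [:ts ! j:]; d = 1 + t * rr mj mj in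
        (d * tt,
         \<lambda>i. d * pp i - t * rr i mj * pp mj,
         \<lambda>i1 i2. rr i1 i2 - t * rr i1 mj * rr i2 mj / d))"

definition tau_t :: "nat \<Rightarrow> nat list \<Rightarrow> real list \<Rightarrow> nat \<Rightarrow> K" where
  "tau_t a m ts j = fst (tilde a m ts j)"

definition pi_t :: "nat \<Rightarrow> nat list \<Rightarrow> real list \<Rightarrow> nat \<Rightarrow> nat \<Rightarrow> K" where
  "pi_t a m ts j i = fst (snd (tilde a m ts j)) i"

end

theory Submission imports Defs begin

lemma elim_det:
  fixes A :: "'a::field mat"
  assumes A: "A \<in> carrier_mat (Suc n) (Suc n)" and d: "A $$ (0,0) \<noteq> 0"
  shows "det A = A $$ (0,0) * det (Matrix.mat n n (\<lambda>(i,j). A $$ (Suc i, Suc j) - A $$ (Suc i, 0) * A $$ (0, Suc j) / A $$ (0,0)))"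
proof -
  define d where "d = A $$ (0,0)"
  define L where "L = Matrix.mat (Suc n) (Suc n) (\<lambda>(i,j). if i = j then 1 else if j = 0 then - A $$ (i,0) / d else (0::'a))"
  define S where "S = Matrix.mat n n (\<lambda>(i,j). A $$ (Suc i, Suc j) - A $$ (Suc i, 0) * A $$ (0, Suc j) / d)"
  define A1 where "A1 = Matrix.mat 1 1 (\<lambda>_. d)"
  define A2 where "A2 = Matrix.mat 1 n (\<lambda>(_,j). A $$ (0, Suc j))"
  have L: "L \<in> carrier_mat (Suc n) (Suc n)" by (simp add: L_def)
  have detL: "det L = 1"
    by (subst det_lower_triangular[OF _ L]) (auto simp: L_def prod_list_diag_prod)
  have entry: "(L * A) $$ (i,j) = (if i = 0 then A $$ (i,j) else A $$ (i,j) - A $$ (i,0) / d * A $$ (0,j))"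
    if ij: "i < Suc n" "j < Suc n" for i j
  proof -
    have "(L * A) $$ (i,j) = (\<Sum>k\<in>{0..<Suc n}. L $$ (i,k) * A $$ (k,j))"
      using ij A L by (simp add: scalar_prod_def)
    also have "\<dots> = L $$ (i,i) * A $$ (i,j) + (\<Sum>k\<in>{0..<Suc n} - {i}. L $$ (i,k) * A $$ (k,j))"
      using ij by (subst sum.remove[of _ i]) auto
    also have "\<dots> = (if i = 0 then A $$ (i,j) else A $$ (i,j) - A $$ (i,0) / d * A $$ (0,j))"
    proof (cases "i = 0")
      case True
      then have "(\<Sum>k\<in>{0..<Suc n} - {i}. L $$ (i,k) * A $$ (k,j)) = 0"
        using ij by (intro sum.neutral) (auto simp: L_def)
      then show ?thesis using True ij by (simp add: L_def)
    next
      case False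
      have "(\<Sum>k\<in>{0..<Suc n} - {i}. L $$ (i,k) * A $$ (k,j)) = L $$ (i,0) * A $$ (0,j) + (\<Sum>k\<in>{0..<Suc n} - {i} - {0}. L $$ (i,k) * A $$ (k,j))"
        using False by (subst sum.remove[of _ 0]) auto
      also have "(\<Sum>k\<in>{0..<Suc n} - {i} - {0}. L $$ (i,k) * A $$ (k,j)) = 0"
        using ij by (intro sum.neutral) (auto simp: L_def)
      finally show ?thesis using False ij by (simp add: L_def)
    qed
    finally show ?thesis .
  qed
  have LA: "L * A = four_block_mat A1 A2 (0\<^sub>m n 1) S"
  proof (rule eq_matI)
    fix i j assume ij: "i < dim_row (four_block_mat A1 A2 (0\<^sub>m n 1) S)" "j < dim_col (four_block_mat A1 A2 (0\<^sub>m n 1) S)"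
    then have ij': "i < Suc n" "j < Suc n" by (auto simp: A1_def S_def)
    show "(L * A) $$ (i,j) = four_block_mat A1 A2 (0\<^sub>m n 1) S $$ (i,j)"
      unfolding entry[OF ij'] using ij' d
      by (cases i; cases j) (auto simp: A1_def A2_def S_def d_def)
  qed (insert A L, auto simp: A1_def S_def)
  have "det (L * A) = det A" using det_mult[OF L A] detL by simp
  also have "det (L * A) = det A1 * det S"
    unfolding LA by (rule det_four_block_mat_lower_left_zero_col) (auto simp: A1_def A2_def S_def)
  also have "det A1 = d" by (subst det_single) (auto simp: A1_def)
  finally show ?thesis by (simp add: d_def S_def)
qed

lemma det_scale_col:
  fixes A B :: "'a::comm_ring_1 mat"
  assumes A: "A \<in> carrier_mat n n" and B: "B \<in> carrier_mat n n" and k: "k < n"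
    and e: "\<And>i j. i < n \<Longrightarrow> j < n \<Longrightarrow> B $$ (i,j) = (if j = k then a * A $$ (i,j) else A $$ (i,j))"
  shows "det B = a * det A"
proof -
  have "B = transpose_mat (multrow k a (transpose_mat A))"
    by (rule eq_matI) (insert A B k, auto simp: e mat_multrow_def)
  then have "det B = det (multrow k a (transpose_mat A))"
    using det_transpose[of "multrow k a (transpose_mat A)" n] A by simp
  also have "\<dots> = a * det (transpose_mat A)" using A k by (intro det_multrow) auto
  also have "det (transpose_mat A) = det A" using A by (simp add: det_transpose)
  finally show ?thesis .
qed

definition stp :: "'a::field \<times> (nat \<Rightarrow> 'a) \<times> (nat \<Rightarrow> nat \<Rightarrow> 'a) \<Rightarrow> nat \<Rightarrow> 'a \<Rightarrow> 'a \<times> (nat \<Rightarrow> 'a) \<times> (nat \<Rightarrow> nat \<Rightarrow> 'a)" where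
  "stp x mj t = (case x of (tt, pp, rr) \<Rightarrow> let d = 1 + t * rr mj mj in
        (d * tt, \<lambda>i. d * pp i - t * rr i mj * pp mj, \<lambda>i1 i2. rr i1 i2 - t * rr i1 mj * rr i2 mj / d))"

primrec tl where
  "tl x mf tf 0 = x"
| "tl x mf tf (Suc j) = stp (tl x mf tf j) (mf j) (tf j)"

lemma tl_shift: "tl x mf tf (Suc j) = tl (stp x (mf 0) (tf 0)) (\<lambda>k. mf (Suc k)) (\<lambda>k. tf (Suc k)) j"
  by (induction j) auto

definition Rm :: "(nat \<Rightarrow> nat \<Rightarrow> 'a::field) \<Rightarrow> (nat \<Rightarrow> nat) \<Rightarrow> (nat \<Rightarrow> 'a) \<Rightarrow> nat \<Rightarrow> 'a mat" where
  "Rm r mf tf n = Matrix.mat n n (\<lambda>(k,l). (if k = l then 1 else 0) + tf l * r (mf k) (mf l))"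

definition Bm :: "(nat \<Rightarrow> nat \<Rightarrow> 'a::field) \<Rightarrow> (nat \<Rightarrow> 'a) \<Rightarrow> (nat \<Rightarrow> nat) \<Rightarrow> (nat \<Rightarrow> 'a) \<Rightarrow> nat \<Rightarrow> nat \<Rightarrow> 'a mat" where
  "Bm r c mf tf n i = Matrix.mat (Suc n) (Suc n) (\<lambda>(k,l). if l = n then c ((mf(n:=i)) k)
      else (if k = l then 1 else 0) + tf l * r ((mf(n:=i)) k) (mf l))"


lemma ar1: "(a::'a::field) + tj*R - t0*X*(tj*Y)/d = a + tj*(R - t0*X*Y/d)"
  by (simp add: algebra_simps)

lemma det_Rm_Suc:
  fixes r :: "nat \<Rightarrow> nat \<Rightarrow> 'a::field"
  assumes sym: "\<And>x y. r x y = r y x" and d: "1 + tf 0 * r (mf 0) (mf 0) \<noteq> 0"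
  shows "det (Rm r mf tf (Suc k)) = (1 + tf 0 * r (mf 0) (mf 0)) *
     det (Rm (\<lambda>i1 i2. r i1 i2 - tf 0 * r i1 (mf 0) * r i2 (mf 0) / (1 + tf 0 * r (mf 0) (mf 0)))
        (\<lambda>k. mf (Suc k)) (\<lambda>k. tf (Suc k)) k)"
proof -
  define A where "A = Rm r mf tf (Suc k)"
  define dd where "dd = 1 + tf 0 * r (mf 0) (mf 0)"
  define r' where "r' = (\<lambda>i1 i2. r i1 i2 - tf 0 * r i1 (mf 0) * r i2 (mf 0) / dd)"
  have A00: "A $$ (0,0) = dd" by (simp add: A_def Rm_def dd_def)
  have "det A = A $$ (0,0) * det (Matrix.mat k k (\<lambda>(i,j). A $$ (Suc i, Suc j) - A $$ (Suc i, 0) * A $$ (0, Suc j) / A $$ (0,0)))"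
    by (rule elim_det) (use d in \<open>auto simp: A_def Rm_def\<close>)
  also have "Matrix.mat k k (\<lambda>(i,j). A $$ (Suc i, Suc j) - A $$ (Suc i, 0) * A $$ (0, Suc j) / A $$ (0,0))
     = Rm r' (\<lambda>k. mf (Suc k)) (\<lambda>k. tf (Suc k)) k"
  proof (rule eq_matI)
    fix i j assume ij: "i < dim_row (Rm r' (\<lambda>k. mf (Suc k)) (\<lambda>k. tf (Suc k)) k)"
      "j < dim_col (Rm r' (\<lambda>k. mf (Suc k)) (\<lambda>k. tf (Suc k)) k)"
    then have ij': "i < k" "j < k" by (auto simp: Rm_def)
    have s: "r (mf 0) (mf (Suc j)) = r (mf (Suc j)) (mf 0)" by (rule sym)
    show "Matrix.mat k k (\<lambda>(i,j). A $$ (Suc i, Suc j) - A $$ (Suc i, 0) * A $$ (0, Suc j) / A $$ (0,0)) $$ (i,j)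
      = Rm r' (\<lambda>k. mf (Suc k)) (\<lambda>k. tf (Suc k)) k $$ (i,j)"
      using ij' unfolding A00 by (simp add: A_def Rm_def r'_def s ar1)
  qed (auto simp: Rm_def)
  finally have "det A = dd * det (Rm r' (\<lambda>k. mf (Suc k)) (\<lambda>k. tf (Suc k)) k)" unfolding A00 .
  then show ?thesis unfolding A_def dd_def r'_def .
qed

lemma ar2: "(dd::'a::field) \<noteq> 0 \<Longrightarrow> cx - t*R*c0/dd = (dd*cx - t*R*c0)/dd"
  by (simp add: field_simps)

lemma det_Bm_Suc:
  fixes r :: "nat \<Rightarrow> nat \<Rightarrow> 'a::field"
  assumes sym: "\<And>x y. r x y = r y x" and d: "1 + tf 0 * r (mf 0) (mf 0) \<noteq> 0"
  shows "det (Bm r c mf tf (Suc n) ii) =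
     det (Bm (\<lambda>i1 i2. r i1 i2 - tf 0 * r i1 (mf 0) * r i2 (mf 0) / (1 + tf 0 * r (mf 0) (mf 0)))
        (\<lambda>i. (1 + tf 0 * r (mf 0) (mf 0)) * c i - tf 0 * r i (mf 0) * c (mf 0))
        (\<lambda>k. mf (Suc k)) (\<lambda>k. tf (Suc k)) n ii)"
proof -
  define dd where "dd = 1 + tf 0 * r (mf 0) (mf 0)"
  define B where "B = Bm r c mf tf (Suc n) ii"
  define r' where "r' = (\<lambda>i1 i2. r i1 i2 - tf 0 * r i1 (mf 0) * r i2 (mf 0) / dd)"
  define c' where "c' = (\<lambda>i. dd * c i - tf 0 * r i (mf 0) * c (mf 0))"
  define mf' where "mf' = (\<lambda>k. mf (Suc k))"
  define tf' where "tf' = (\<lambda>k. tf (Suc k))"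
  have dd: "dd \<noteq> 0" using d by (simp add: dd_def)
  have B00: "B $$ (0,0) = dd" by (simp add: B_def Bm_def dd_def)
  have "det B = B $$ (0,0) * det (Matrix.mat (Suc n) (Suc n) (\<lambda>(i,j). B $$ (Suc i, Suc j) - B $$ (Suc i, 0) * B $$ (0, Suc j) / B $$ (0,0)))"
    by (rule elim_det) (use d in \<open>auto simp: B_def Bm_def\<close>)
  also have "Matrix.mat (Suc n) (Suc n) (\<lambda>(i,j). B $$ (Suc i, Suc j) - B $$ (Suc i, 0) * B $$ (0, Suc j) / B $$ (0,0))
     = Bm r' (\<lambda>x. (1/dd) * c' x) mf' tf' n ii"
  proof (rule eq_matI)
    fix i j assume ij: "i < dim_row (Bm r' (\<lambda>x. (1/dd) * c' x) mf' tf' n ii)"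
      "j < dim_col (Bm r' (\<lambda>x. (1/dd) * c' x) mf' tf' n ii)"
    then have ij': "i < Suc n" "j < Suc n" by (auto simp: Bm_def)
    have u: "(mf(Suc n := ii)) (Suc i) = (mf'(n := ii)) i" by (simp add: mf'_def)
    have u0: "(mf(Suc n := ii)) 0 = mf 0" by simp
    show "Matrix.mat (Suc n) (Suc n) (\<lambda>(i,j). B $$ (Suc i, Suc j) - B $$ (Suc i, 0) * B $$ (0, Suc j) / B $$ (0,0)) $$ (i,j)
      = Bm r' (\<lambda>x. (1/dd) * c' x) mf' tf' n ii $$ (i,j)"
    proof (cases "j = n")
      case True
      then show ?thesis using ij' unfolding B00
        by (simp add: B_def Bm_def u u0 c'_def ar2[OF dd] del: fun_upd_apply)
    next
      case False
      have s: "r (mf 0) (mf (Suc j)) = r (mf (Suc j)) (mf 0)" by (rule sym)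
      show ?thesis using ij' False unfolding B00
        by (simp add: B_def Bm_def u u0 r'_def s ar1 mf'_def tf'_def del: fun_upd_apply)
    qed
  qed (auto simp: Bm_def)
  also have "det (Bm r' (\<lambda>x. (1/dd) * c' x) mf' tf' n ii) = (1 / dd) * det (Bm r' c' mf' tf' n ii)"
    by (rule det_scale_col[where k = n]) (auto simp: Bm_def)
  finally have "det B = dd * ((1 / dd) * det (Bm r' c' mf' tf' n ii))" unfolding B00 .
  then have "det B = det (Bm r' c' mf' tf' n ii)" using dd by simp
  then show ?thesis unfolding B_def r'_def c'_def dd_def mf'_def tf'_def .
qed

lemma core:
  fixes r :: "nat \<Rightarrow> nat \<Rightarrow> 'a::field"
  assumes "\<And>x y. r x y = r y x" "\<And>k. k \<le> n \<Longrightarrow> det (Rm r mf tf k) \<noteq> 0"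
  shows "fst (tl (\<tau>0, c, r) mf tf n) = \<tau>0 * det (Rm r mf tf n)
    \<and> (\<forall>i. fst (snd (tl (\<tau>0, c, r) mf tf n)) i = det (Bm r c mf tf n i))"
  using assms
proof (induction n arbitrary: \<tau>0 c r mf tf)
  case 0
  have "Rm r mf tf 0 = 1\<^sub>m 0" by (rule eq_matI) (auto simp: Rm_def)
  moreover have "det (Bm r c mf tf 0 i) = c i" for i
    by (subst det_single) (auto simp: Bm_def)
  ultimately show ?case by simp
next
  case (Suc n)
  define dd where "dd = 1 + tf 0 * r (mf 0) (mf 0)"
  define r' where "r' = (\<lambda>i1 i2. r i1 i2 - tf 0 * r i1 (mf 0) * r i2 (mf 0) / dd)"
  define c' where "c' = (\<lambda>i. dd * c i - tf 0 * r i (mf 0) * c (mf 0))"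
  define mf' where "mf' = (\<lambda>k. mf (Suc k))"
  define tf' where "tf' = (\<lambda>k. tf (Suc k))"
  have "det (Rm r mf tf 1) = dd" by (subst det_single) (auto simp: Rm_def dd_def)
  then have dd: "dd \<noteq> 0" using Suc.prems(2)[of 1] by simp
  have symr: "r x y = r y x" for x y by (rule Suc.prems(1))
  have sym': "r' x y = r' y x" for x y
    unfolding r'_def by (simp add: symr[of x y] ac_simps)
  have R: "det (Rm r mf tf (Suc k)) = dd * det (Rm r' mf' tf' k)" for k
    unfolding dd_def r'_def mf'_def tf'_def
    by (rule det_Rm_Suc[OF symr]) (use dd in \<open>simp add: dd_def\<close>)
  have B: "det (Bm r c mf tf (Suc n) i) = det (Bm r' c' mf' tf' n i)" for i
    unfolding dd_def r'_def mf'_def tf'_def c'_def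
    by (rule det_Bm_Suc[OF symr]) (use dd in \<open>simp add: dd_def\<close>)
  have nz: "det (Rm r' mf' tf' k) \<noteq> 0" if "k \<le> n" for k
    using Suc.prems(2)[of "Suc k"] that R[of k] by simp
  have sh: "tl (\<tau>0, c, r) mf tf (Suc n) = tl (dd * \<tau>0, c', r') mf' tf' n"
    unfolding tl_shift by (simp add: stp_def Let_def dd_def c'_def r'_def mf'_def tf'_def)
  from Suc.IH[of r' mf' tf' "dd * \<tau>0" c', OF sym' nz]
  show ?case unfolding sh R B by simp
qed

lemma rho_sym: "rho a i j = rho a j i"
  unfolding rho_def by (simp add: ac_simps)

definition pint :: "real poly \<Rightarrow> real poly" where
  "pint f = (\<Sum>k\<le>degree f. monom (coeff f k / real (Suc k)) (Suc k))"

lemma pderiv_sum': "pderiv (sum f I) = sum (\<lambda>i. pderiv (f i)) I"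
  by (induction I rule: infinite_finite_induct) (auto simp: pderiv_add)

lemma pderiv_pint: "pderiv (pint f) = f"
proof -
  have "pderiv (pint f) = (\<Sum>k\<le>degree f. monom (coeff f k) k)"
    unfolding pint_def pderiv_sum' pderiv_monom
    by (intro sum.cong refl) (simp del: of_nat_Suc)
  also have "\<dots> = f" by (rule poly_as_sum_of_monoms)
  finally show ?thesis .
qed

lemma rho_at_m1: "poly (rho a i j) (-1) = 0"
proof -
  define al where "al = real a + 1/2"
  define f where "f = geg al i * geg al j * [:1, 0, -1:] ^ a"
  have pf: "poly f u = poly (geg al i) u * poly (geg al j) u * (1 - u^2)^a" for u
    by (simp add: f_def poly_power power2_eq_square)
  define F where "F = pint f"
  define p where "p = F - [:poly F (-1):]"
  have ftc0: "(LBINT u=ereal (-1)..ereal z. poly f u) = poly F z - poly F (-1)" for z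
  proof (rule interval_integral_FTC_finite)
    show "continuous_on {min (-1) z..max (-1) z} (poly f)"
      by (intro continuous_intros)
    fix x
    have "(poly F has_real_derivative poly f x) (at x)"
      using poly_DERIV[of F x] by (simp add: F_def pderiv_pint)
    then show "(poly F has_vector_derivative poly f x) (at x within {min (-1) z..max (-1) z})"
      by (simp add: has_real_derivative_iff_has_vector_derivative[symmetric] has_field_derivative_at_within)
  qed
  have ftc: "(LBINT u=-1..z. poly f u) = poly F z - poly F (-1)" for z
  proof -
    have e: "ereal (-1) = -1" by (simp add: one_ereal_def)
    show ?thesis using ftc0[of z] unfolding e .
  qed
  have P: "\<forall>z. poly p z = (LBINT u=-1..z. poly (geg al i) u * poly (geg al j) u * (1 - u^2)^a)"
    using ftc by (simp add: p_def pf[symmetric])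
  have "rho a i j = p"
    unfolding rho_def al_def[symmetric]
  proof (rule the1_equality)
    show "\<exists>!p. \<forall>z. poly p z = (LBINT u=-1..z. poly (geg al i) u * poly (geg al j) u * (1 - u^2)^a)"
    proof (rule ex1I[of _ p])
      fix q assume "\<forall>z. poly q z = (LBINT u=-1..z. poly (geg al i) u * poly (geg al j) u * (1 - u^2)^a)"
      then have "poly q = poly p" using P by auto
      then show "q = p" by (simp add: poly_eq_poly_eq_iff)
    qed (rule P)
  qed (rule P)
  then show ?thesis by (simp add: p_def)
qed

interpretation emb_hom: comm_ring_hom emb
  by unfold_locales (simp_all add: emb_def One_fract_def Zero_fract_def)

interpretation ev_hom: comm_ring_hom "\<lambda>p. poly p (-1::real)"
  by unfold_locales auto

lemma emb_smult: "emb [:t:] * emb p = emb (Polynomial.smult t p)"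
  by (simp add: emb_hom.hom_mult[symmetric])

lemma emb_eq_0: "emb p = 0 \<longleftrightarrow> p = 0"
  by (simp add: emb_def Zero_fract_def eq_fract)

abbreviation rK where "rK a \<equiv> (\<lambda>i j. emb (rho a i j))"

lemma Rm_emb: "Rm (rK a) mf (\<lambda>l. emb [:tv l:]) k =
    map_mat emb (Matrix.mat k k (\<lambda>(x,y). (if x = y then 1 else 0) + [:tv y:] * rho a (mf x) (mf y)))"
  by (rule eq_matI) (auto simp: Rm_def emb_hom.hom_add emb_smult)

lemma det_Rm_nz: "det (Rm (rK a) mf (\<lambda>l. emb [:tv l:]) k) \<noteq> 0"
proof -
  define P where "P = Matrix.mat k k (\<lambda>(x,y). (if x = y then 1 else 0) + [:tv y:] * rho a (mf x) (mf y))"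
  have "map_mat (\<lambda>p. poly p (-1)) P = 1\<^sub>m k"
    by (rule eq_matI) (auto simp: P_def rho_at_m1)
  then have "poly (det P) (-1) = 1"
    using ev_hom.hom_det[of P] by simp
  then have "det P \<noteq> 0" by auto
  then show ?thesis unfolding Rm_emb P_def[symmetric] emb_hom.hom_det emb_eq_0 .
qed

lemma Bm_emb: "\<exists>p. det (Bm (rK a) (\<lambda>i. emb (g i)) mf (\<lambda>l. emb [:tv l:]) n i) = emb p"
proof -
  have "Bm (rK a) (\<lambda>i. emb (g i)) mf (\<lambda>l. emb [:tv l:]) n i = map_mat emb
     (Matrix.mat (Suc n) (Suc n) (\<lambda>(k,l). if l = n then g ((mf(n:=i)) k)
      else (if k = l then 1 else 0) + [:tv l:] * rho a ((mf(n:=i)) k) (mf l)))"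
    by (rule eq_matI) (auto simp: Bm_def emb_hom.hom_add emb_smult)
  then show ?thesis by (auto simp: emb_hom.hom_det)
qed

lemma tilde_tl: "tilde a m ts j = tl (1, \<lambda>i. emb (geg (real a + 1/2) i), rK a) (nth m) (\<lambda>l. emb [:ts!l:]) j"
  by (induction j) (auto simp: stp_def Let_def split: prod.splits)

lemma Qvec_idx:
  fixes R Ri :: "'a::field mat"
  assumes Ri: "Ri \<in> carrier_mat n n" and k: "k < n" and v: "v \<in> carrier_vec n"
  shows "((d \<cdot>\<^sub>m Ri) *\<^sub>v v) $ k = d * ((Ri *\<^sub>v v) $ k)"
  using assms by simp

theorem mainTheorem15:
  fixes a :: nat and m :: "nat list" and ts :: "real list"
  assumes "length ts = length m"
  shows "tau a m ts = tau_t a m ts (length m)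
    \<and> (\<forall>s i. Cmi a m ts s i = pi_t a m ts (length m) i)
    \<and> (\<forall>j \<le> length m. (\<exists>p. tau_t a m ts j = emb p) \<and> (\<forall>i. \<exists>p. pi_t a m ts j i = emb p))"
proof -
  define cK where "cK = (\<lambda>i. emb (geg (real a + 1/2) i))"
  define mf where "mf = nth m"
  define tf where "tf = (\<lambda>l. emb [:ts!l:])"
  define N where "N = length m"
  have nz: "det (Rm (rK a) mf tf k) \<noteq> 0" for k
    unfolding tf_def by (rule det_Rm_nz)
  have C: "fst (tl (1, cK, rK a) mf tf j) = det (Rm (rK a) mf tf j)
    \<and> (\<forall>i. fst (snd (tl (1, cK, rK a) mf tf j)) i = det (Bm (rK a) cK mf tf j i))" for j
    using core[of "rK a" j mf tf 1 cK] rho_sym nz by auto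
  have tt: "tau_t a m ts j = det (Rm (rK a) mf tf j)" for j
    using C[of j] unfolding tau_t_def tilde_tl cK_def mf_def tf_def by simp
  have pt: "pi_t a m ts j i = det (Bm (rK a) cK mf tf j i)" for j i
    using C[of j] unfolding pi_t_def tilde_tl cK_def mf_def tf_def by simp
  have c1: "tau a m ts = tau_t a m ts N"
  proof -
    have "Rmat a m ts = Rm (rK a) mf tf N"
      by (rule eq_matI) (auto simp: Rmat_def Rm_def mf_def tf_def N_def)
    then show ?thesis by (simp add: tau_def tt)
  qed
  have c3: "(\<exists>p. tau_t a m ts j = emb p) \<and> (\<forall>i. \<exists>p. pi_t a m ts j i = emb p)" for j
  proof
    show "\<exists>p. tau_t a m ts j = emb p"
      unfolding tt tf_def Rm_emb by (auto simp: emb_hom.hom_det)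
    show "\<forall>i. \<exists>p. pi_t a m ts j i = emb p"
      unfolding pt tf_def cK_def using Bm_emb by blast
  qed
  have c2: "Cmi a m ts s i = pi_t a m ts N i" for s i
  proof -
    define R where "R = Rmat a (m @ [i]) (ts @ [s])"
    define v where "v = Matrix.vec (Suc N) (\<lambda>k. emb (geg (real a + 1/2) ((m @ [i]) ! k)))"
    have RR: "R = Rm (rK a) (nth (m @ [i])) (\<lambda>l. emb [:(ts @ [s]) ! l:]) (Suc N)"
      by (rule eq_matI) (auto simp: R_def Rmat_def Rm_def N_def)
    have Rc: "R \<in> carrier_mat (Suc N) (Suc N)" by (simp add: R_def Rmat_def N_def)
    have dR: "det R \<noteq> 0" unfolding RR by (rule det_Rm_nz)
    have "mat_inverse R \<noteq> None"
      using mat_inverse(1)[OF Rc, where b="()"] det_non_zero_imp_unit[OF Rc dR, where b="()"] by blast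
    then obtain Ri where Ri: "mat_inverse R = Some Ri" by auto
    from mat_inverse(2)[OF Rc Ri] have RRi: "R * Ri = 1\<^sub>m (Suc N)" and Ric: "Ri \<in> carrier_mat (Suc N) (Suc N)"
      by auto
    have vc: "v \<in> carrier_vec (Suc N)" by (simp add: v_def)
    define x where "x = Ri *\<^sub>v v"
    have xc: "x \<in> carrier_vec (Suc N)" using Ric vc by (simp add: x_def)
    have Rx: "R *\<^sub>v x = v"
      unfolding x_def using Rc Ric vc RRi by (simp add: assoc_mult_mat_vec[symmetric])
    have "Cmi a m ts s i = det R * x $ N"
      unfolding Cmi_def Qvec_def tau_def R_def[symmetric] Ri option.sel
      using Qvec_idx[OF Ric _ vc, of N "det R"] by (simp add: v_def N_def x_def)
    also have "\<dots> = det (replace_col R v N)"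
      using cramer_lemma_mat[OF Rc xc, of N] unfolding Rx by simp
    also have "replace_col R v N = Bm (rK a) cK mf tf N i"
      by (rule eq_matI) (use assms in \<open>auto simp: replace_col_def R_def Rmat_def Bm_def v_def cK_def mf_def tf_def N_def nth_append\<close>)
    finally show ?thesis by (simp add: pt)
  qed
  show ?thesis using c1 c2 c3 unfolding N_def by blast
qed

end
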